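(* Let $n\ge2$, $q\in\mathbb C$ a primitive $n$-th root of unity, and $u_q(sl_2)$ the $\mathbb C$-algebra with generators $K,E,F$ and relations $K^n=1$, $E^n=F^n=0$, $EK=qKE$, $FK=q^{-1}KF$, $EF-FE=\frac{K-K^{-1}}{q-q^{-1}}$, with basis $\{K^iF^jE^k:0\le i,j,k\le n-1\}$. Let $u\in u_q(sl_2)_0$ be invertible and write $u=u_K+\cdots$, where $u_K$ lies in the Cartan subalgebra spanned by $1,K,\dots,K^{n-1}$ and $\cdots$ denotes a linear combination of basis monomials $K^iF^jE^j$ with $j\ge1$. Then $u_K$ is invertible and $u^{-1}=u_K^{-1}+\cdots$, where again $\cdots$ denotes a linear combination of basis monomials $K^iF^jE^j$ with $j\ge1$.
   Context: $u_q(sl_2)_0$ denotes the degree-zero part of the $\mathbb Z/n\mathbb Z$-grading in which $K^iF^jE^k$ has degree $j-k$ mod $n$, i.e. the span of the monomials $K^iF^jE^j$, $0\le i,j\le n-1$. *)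

theory Defs
  imports Complex_Main
begin

text \<open>Model of u_q(sl_2): an arbitrary ring A (type 'a) with a central embedding
  sc of the complex scalars, elements K, E, F satisfying the defining relations,
  and such that the monomials K^i F^j E^k (0 \<le> i,j,k \<le> n-1) form a C-basis.
  Any such algebra is isomorphic to u_q(sl_2).\<close>

definition primitive_root :: "nat \<Rightarrow> complex \<Rightarrow> bool" where
  "primitive_root n q \<longleftrightarrow> q ^ n = 1 \<and> (\<forall>k. 0 < k \<and> k < n \<longrightarrow> q ^ k \<noteq> 1)"

definition scalar_embedding :: "(complex \<Rightarrow> 'a::ring_1) \<Rightarrow> bool" where
  "scalar_embedding sc \<longleftrightarrow>
     sc 1 = 1 \<and> (\<forall>x y. sc (x + y) = sc x + sc y) \<and> (\<forall>x y. sc (x * y) = sc x * sc y)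
     \<and> (\<forall>x y. sc x * y = y * sc x)"

definition uq_sl2 :: "nat \<Rightarrow> complex \<Rightarrow> (complex \<Rightarrow> 'a::ring_1) \<Rightarrow> 'a \<Rightarrow> 'a \<Rightarrow> 'a \<Rightarrow> bool" where
  "uq_sl2 n q sc K E F \<longleftrightarrow>
     scalar_embedding sc \<and>
     K ^ n = 1 \<and> E ^ n = 0 \<and> F ^ n = 0 \<and>
     E * K = sc q * K * E \<and> F * K = sc (inverse q) * K * F \<and>
     E * F - F * E = sc (inverse (q - inverse q)) * (K - K ^ (n - 1)) \<and>
     (\<forall>x. \<exists>a. x = (\<Sum>(i,j,k)\<in>{..<n}\<times>{..<n}\<times>{..<n}. sc (a (i,j,k)) * K ^ i * F ^ j * E ^ k)) \<and>
     (\<forall>a. (\<Sum>(i,j,k)\<in>{..<n}\<times>{..<n}\<times>{..<n}. sc (a (i,j,k)) * K ^ i * F ^ j * E ^ k) = 0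
          \<longrightarrow> (\<forall>t\<in>{..<n}\<times>{..<n}\<times>{..<n}. a t = 0))"

definition is_inverse :: "'a::ring_1 \<Rightarrow> 'a \<Rightarrow> bool" where
  "is_inverse u v \<longleftrightarrow> u * v = 1 \<and> v * u = 1"

end

theory Submission
  imports Defs
begin

locale uqloc =
  fixes n :: nat and q :: complex and sc :: "complex \<Rightarrow> 'a::ring_1" and K E F :: 'a
  assumes n2: "n \<ge> 2" and prim: "primitive_root n q" and U: "uq_sl2 n q sc K E F"
begin

lemma scE: "scalar_embedding sc"
  using U unfolding uq_sl2_def by (elim conjE) assumption

lemma sc_one: "sc 1 = 1" and sc_add: "sc (x + y) = sc x + sc y"
  and sc_mult: "sc (x * y) = sc x * sc y" and sc_comm: "sc x * z = z * sc x"
  using scE unfolding scalar_embedding_def by blast+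

lemma sc_zero: "sc 0 = 0"
  using sc_add[of 0 0] by simp

lemma sc_uminus: "sc (- x) = - sc x"
proof -
  have "sc x + sc (-x) = 0" using sc_add[of x "-x"] by (simp add: sc_zero)
  then show ?thesis by (metis minus_unique)
qed

lemma sc_diff: "sc (x - y) = sc x - sc y"
  using sc_add[of x "-y"] by (simp add: sc_uminus)

lemma sc_pow: "sc (x ^ m) = sc x ^ m"
  by (induction m) (auto simp: sc_one sc_mult)

lemma scm: "sc x * (sc y * z) = sc (x * y) * z" "sc x * sc y = sc (x * y)"
  by (simp_all add: sc_mult mult.assoc)

lemma scpc: "K ^ i * sc x = sc x * K ^ i" "F ^ i * sc x = sc x * F ^ i" "E ^ i * sc x = sc x * E ^ i"
  "K * sc x = sc x * K" "F * sc x = sc x * F" "E * sc x = sc x * E"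
  by (simp_all add: sc_comm)

lemma scpc2: "K ^ i * (sc x * z) = sc x * (K ^ i * z)" "F ^ i * (sc x * z) = sc x * (F ^ i * z)"
  "E ^ i * (sc x * z) = sc x * (E ^ i * z)"
  "K * (sc x * z) = sc x * (K * z)" "F * (sc x * z) = sc x * (F * z)" "E * (sc x * z) = sc x * (E * z)"
  by (simp_all add: mult.assoc[symmetric] scpc)

lemmas scs = scm scpc scpc2

lemma Kn: "K ^ n = 1" using U unfolding uq_sl2_def by (elim conjE) assumption
lemma En: "E ^ n = 0" using U unfolding uq_sl2_def by (elim conjE) assumption
lemma EK: "E * K = sc q * K * E" using U unfolding uq_sl2_def by (elim conjE) assumption
lemma FK: "F * K = sc (inverse q) * K * F" using U unfolding uq_sl2_def by (elim conjE) assumption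
lemma span: "\<forall>x. \<exists>a. x = (\<Sum>(i,j,k)\<in>{..<n}\<times>{..<n}\<times>{..<n}. sc (a (i,j,k)) * K ^ i * F ^ j * E ^ k)"
  using U unfolding uq_sl2_def by (elim conjE) assumption
lemma indep: "\<forall>a. (\<Sum>(i,j,k)\<in>{..<n}\<times>{..<n}\<times>{..<n}. sc (a (i,j,k)) * K ^ i * F ^ j * E ^ k) = 0
          \<longrightarrow> (\<forall>t\<in>{..<n}\<times>{..<n}\<times>{..<n}. a t = 0)"
  using U unfolding uq_sl2_def by (elim conjE) assumption

lemma qn: "q ^ n = 1" and qk: "0 < k \<Longrightarrow> k < n \<Longrightarrow> q ^ k \<noteq> 1"
  using prim by (auto simp: primitive_root_def)

lemma q0: "q \<noteq> 0"
  using qn n2 by (cases n) auto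

lemma FjK: "F ^ j * K = sc (inverse q ^ j) * K * F ^ j"
proof (induction j)
  case 0 then show ?case by (simp add: sc_one)
next
  case (Suc j)
  have "F ^ Suc j * K = F * (F ^ j * K)" by (simp add: mult.assoc)
  also have "\<dots> = F * (sc (inverse q ^ j) * K * F ^ j)" using Suc by simp
  also have "\<dots> = sc (inverse q ^ j) * ((F * K) * F ^ j)" by (simp add: scs mult.assoc)
  also have "\<dots> = sc (inverse q ^ j) * (sc (inverse q) * K * F * F ^ j)" by (simp add: FK)
  also have "\<dots> = sc (inverse q ^ Suc j) * K * F ^ Suc j"
    by (simp add: mult.assoc scs mult.commute mult.left_commute)
  finally show ?case .
qed

lemma EkK: "E ^ k * K = sc (q ^ k) * K * E ^ k"
proof (induction k)
  case 0 then show ?case by (simp add: sc_one)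
next
  case (Suc j)
  have "E ^ Suc j * K = E * (E ^ j * K)" by (simp add: mult.assoc)
  also have "\<dots> = E * (sc (q ^ j) * K * E ^ j)" using Suc by simp
  also have "\<dots> = sc (q ^ j) * ((E * K) * E ^ j)" by (simp add: scs mult.assoc)
  also have "\<dots> = sc (q ^ j) * (sc q * K * E * E ^ j)" by (simp add: EK)
  also have "\<dots> = sc (q ^ Suc j) * K * E ^ Suc j"
    by (simp add: mult.assoc scs mult.commute mult.left_commute)
  finally show ?case .
qed

lemma KmK: "K ^ m * (K * z) = K * (K ^ m * z)"
  by (simp add: mult.assoc[symmetric] power_commutes)

lemma EKm: "E * K ^ m = sc (q ^ m) * K ^ m * E"
proof (induction m)
  case 0 then show ?case by (simp add: sc_one)
next
  case (Suc m)
  have "E * K ^ Suc m = (E * K ^ m) * K" by (simp add: mult.assoc power_Suc2 power_commutes)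
  also have "\<dots> = sc (q ^ m) * K ^ m * (E * K)" using Suc by (simp add: mult.assoc)
  also have "\<dots> = sc (q ^ Suc m) * K ^ Suc m * E"
    by (simp add: EK mult.assoc scs power_Suc2 mult.commute KmK)
  finally show ?case .
qed

definition I3 :: "(nat \<times> nat \<times> nat) set" where "I3 = {..<n}\<times>{..<n}\<times>{..<n}"

definition bs :: "(nat \<times> nat \<times> nat \<Rightarrow> complex) \<Rightarrow> 'a" where
  "bs d = (\<Sum>(i,j,k)\<in>I3. sc (d (i,j,k)) * K ^ i * F ^ j * E ^ k)"

lemma span': "\<exists>d. x = bs d" using span unfolding bs_def I3_def by blast

lemma indep': "bs d = 0 \<Longrightarrow> t \<in> I3 \<Longrightarrow> d t = 0" using indep unfolding bs_def I3_def by blast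

lemma bs_diff: "bs d - bs e = bs (\<lambda>t. d t - e t)"
  unfolding bs_def by (simp add: sum_subtractf[symmetric] case_prod_beta sc_diff left_diff_distrib)

lemma Kinv1: "K ^ (n - 1) * K = 1" and Kinv2: "K * K ^ (n - 1) = 1"
proof -
  have e: "Suc (n - 1) = n" using n2 by simp
  have "K ^ (n - 1) * K = K ^ Suc (n - 1)" by (rule power_Suc2[symmetric])
  then have "K ^ (n - 1) * K = K ^ n" by (simp only: e)
  then show "K ^ (n - 1) * K = 1" using Kn by simp
  then show "K * K ^ (n - 1) = 1" by (simp add: power_commutes)
qed

lemma conj_term: "K ^ (n - 1) * (sc c * K ^ i * F ^ j * E ^ k) * K
   = sc (c * (q ^ k * inverse q ^ j)) * K ^ i * F ^ j * E ^ k"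
proof -
  have "sc c * K ^ i * F ^ j * E ^ k * K = sc c * K ^ i * F ^ j * (E ^ k * K)"
    by (simp add: mult.assoc)
  also have "\<dots> = sc c * K ^ i * F ^ j * (sc (q ^ k) * K * E ^ k)" by (simp add: EkK)
  also have "\<dots> = sc c * sc (q ^ k) * K ^ i * (F ^ j * K) * E ^ k"
    by (simp add: mult.assoc scs)
  also have "\<dots> = sc c * sc (q ^ k) * K ^ i * (sc (inverse q ^ j) * K * F ^ j) * E ^ k"
    by (simp add: FjK)
  also have "\<dots> = sc (c * (q ^ k * inverse q ^ j)) * (K ^ i * K) * F ^ j * E ^ k"
    by (simp add: mult.assoc scs mult.commute mult.left_commute)
  finally have 1: "sc c * K ^ i * F ^ j * E ^ k * K = sc (c * (q ^ k * inverse q ^ j)) * (K ^ i * K) * F ^ j * E ^ k" .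
  have 2: "K ^ (n - 1) * (K ^ i * K) = K ^ i"
    by (metis Kinv1 mult.assoc mult_1 power_commutes)
  have "K ^ (n - 1) * (sc c * K ^ i * F ^ j * E ^ k) * K = K ^ (n - 1) * (sc c * K ^ i * F ^ j * E ^ k * K)"
    by (simp add: mult.assoc)
  also have "\<dots> = sc (c * (q ^ k * inverse q ^ j)) * (K ^ (n - 1) * (K ^ i * K)) * F ^ j * E ^ k"
    unfolding 1 by (simp add: mult.assoc scs)
  also have "\<dots> = sc (c * (q ^ k * inverse q ^ j)) * K ^ i * F ^ j * E ^ k" unfolding 2 ..
  finally show ?thesis .
qed

lemma conj_bs: "K ^ (n - 1) * bs d * K = bs (\<lambda>(i,j,k). d (i,j,k) * (q ^ k * inverse q ^ j))"
  unfolding bs_def sum_distrib_left sum_distrib_right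
  by (rule sum.cong[OF refl]) (simp add: case_prod_beta conj_term del: One_nat_def)

lemma fac_ne1: assumes "j < n" "k < n" "j \<noteq> k" shows "q ^ k * inverse q ^ j \<noteq> 1"
proof
  assume h: "q ^ k * inverse q ^ j = 1"
  have "q ^ k = q ^ j"
  proof -
    have "q ^ k = q ^ k * inverse q ^ j * q ^ j" using q0 by (simp add: power_inverse mult.assoc)
    then show ?thesis using h by simp
  qed
  show False
  proof (cases "j < k")
    case True
    then have "q ^ k = q ^ j * q ^ (k - j)" by (simp add: power_add[symmetric])
    then have "q ^ (k - j) = 1" using \<open>q ^ k = q ^ j\<close> q0 by simp
    then show False using qk[of "k - j"] True assms by simp
  next
    case False
    then have "k < j" using assms by simp
    then have "q ^ j = q ^ k * q ^ (j - k)" by (simp add: power_add[symmetric])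
    then have "q ^ (j - k) = 1" using \<open>q ^ k = q ^ j\<close> q0 by simp
    then show False using qk[of "j - k"] \<open>k < j\<close> assms by simp
  qed
qed

lemma comm_K: assumes "K * x = x * K"
  shows "\<exists>b. x = (\<Sum>(i,j)\<in>{..<n}\<times>{..<n}. sc (b i j) * K ^ i * F ^ j * E ^ j)"
proof -
  obtain d where x: "x = bs d" using span' by blast
  have "K ^ (n - 1) * x * K = K ^ (n - 1) * (K * x)" using assms by (simp add: mult.assoc)
  also have "\<dots> = x" by (simp add: mult.assoc[symmetric] Kinv1 del: One_nat_def)
  finally have "bs d = bs (\<lambda>(i,j,k). d (i,j,k) * (q ^ k * inverse q ^ j))"
    using conj_bs x by simp
  then have "bs (\<lambda>t. d t - (\<lambda>(i,j,k). d (i,j,k) * (q ^ k * inverse q ^ j)) t) = 0"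
    by (simp add: bs_diff[symmetric])
  then have z: "d (i,j,k) - d (i,j,k) * (q ^ k * inverse q ^ j) = 0" if "(i,j,k) \<in> I3" for i j k
    using indep'[OF _ that] by fastforce
  have dz: "d (i,j,k) = 0" if "(i,j,k) \<in> I3" "j \<noteq> k" for i j k
  proof -
    have "d (i,j,k) * (1 - q ^ k * inverse q ^ j) = 0" using z[OF that(1)] by (simp add: algebra_simps)
    moreover have "1 - q ^ k * inverse q ^ j \<noteq> 0" using fac_ne1[of j k] that by (auto simp: I3_def)
    ultimately show ?thesis by simp
  qed
  let ?g = "\<lambda>(i,j,k). sc (d (i,j,k)) * K ^ i * F ^ j * E ^ k"
  let ?h = "\<lambda>(i::nat,j::nat). (i,j,j)"
  have sub: "?h ` ({..<n}\<times>{..<n}) \<subseteq> I3" by (auto simp: I3_def)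
  have "bs d = sum ?g (?h ` ({..<n}\<times>{..<n}))"
    unfolding bs_def
  proof (rule sum.mono_neutral_right[OF _ sub])
    show "finite I3" by (simp add: I3_def)
    show "\<forall>t\<in>I3 - ?h ` ({..<n} \<times> {..<n}). ?g t = 0"
    proof
      fix t assume t: "t \<in> I3 - ?h ` ({..<n} \<times> {..<n})"
      obtain i j k where tt: "t = (i,j,k)" by (cases t) auto
      have "j \<noteq> k" using t tt by (auto simp: I3_def image_iff)
      then show "?g t = 0" using dz[of i j k] t tt by (simp add: sc_zero)
    qed
  qed
  also have "\<dots> = (\<Sum>(i,j)\<in>{..<n}\<times>{..<n}. sc (d (i,j,j)) * K ^ i * F ^ j * E ^ j)"
    by (subst sum.reindex) (auto simp: inj_on_def case_prod_beta)
  finally show ?thesis using x by (intro exI[of _ "\<lambda>i j. d (i,j,j)"]) simp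
qed

definition inH :: "'a \<Rightarrow> bool" where "inH x \<longleftrightarrow> (\<exists>c. x = (\<Sum>i<n. sc (c i) * K ^ i))"
definition inAE :: "'a \<Rightarrow> bool" where "inAE x \<longleftrightarrow> (\<exists>y. x = y * E)"
definition inN :: "'a \<Rightarrow> bool" where "inN x \<longleftrightarrow> (\<forall>h. inH h \<longrightarrow> inAE (x * h))"

lemma inH_0: "inH 0"
  unfolding inH_def by (rule exI[of _ "\<lambda>_. 0"]) (simp add: sc_zero)

lemma inH_add: assumes "inH x" "inH y" shows "inH (x + y)"
proof -
  obtain c where x: "x = (\<Sum>i<n. sc (c i) * K ^ i)" using assms(1) inH_def by blast
  obtain d where y: "y = (\<Sum>i<n. sc (d i) * K ^ i)" using assms(2) inH_def by blast
  have "x + y = (\<Sum>i<n. sc (c i + d i) * K ^ i)"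
    unfolding x y by (simp add: sc_add distrib_right sum.distrib)
  then show ?thesis unfolding inH_def by (rule exI[of _ "\<lambda>i. c i + d i"])
qed

lemma inH_diff: assumes "inH x" "inH y" shows "inH (x - y)"
proof -
  obtain c where x: "x = (\<Sum>i<n. sc (c i) * K ^ i)" using assms(1) inH_def by blast
  obtain d where y: "y = (\<Sum>i<n. sc (d i) * K ^ i)" using assms(2) inH_def by blast
  have "x - y = (\<Sum>i<n. sc (c i - d i) * K ^ i)"
    unfolding x y by (simp add: sc_diff left_diff_distrib sum_subtractf)
  then show ?thesis unfolding inH_def by (rule exI[of _ "\<lambda>i. c i - d i"])
qed

lemma inH_smult: assumes "inH x" shows "inH (sc z * x)"
proof -
  obtain c where x: "x = (\<Sum>i<n. sc (c i) * K ^ i)" using assms(1) inH_def by blast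
  have "sc z * x = (\<Sum>i<n. sc (z * c i) * K ^ i)"
    unfolding x by (simp add: sum_distrib_left sc_mult mult.assoc)
  then show ?thesis unfolding inH_def by (rule exI[of _ "\<lambda>i. z * c i"])
qed

lemma inH_sum: "finite A \<Longrightarrow> (\<And>a. a \<in> A \<Longrightarrow> inH (f a)) \<Longrightarrow> inH (sum f A)"
  by (induction A rule: finite_induct) (auto simp: inH_0 inH_add)

lemma Kmod: "K ^ m = K ^ (m mod n)"
proof -
  have "K ^ m = K ^ (n * (m div n) + m mod n)" by simp
  also have "\<dots> = (K ^ n) ^ (m div n) * K ^ (m mod n)" by (simp only: power_add power_mult)
  finally show ?thesis using Kn by simp
qed

lemma inH_K: "inH (K ^ m)"
proof -
  have "(\<Sum>i<n. sc (if i = m mod n then 1 else 0) * K ^ i) = (\<Sum>i<n. if i = m mod n then K ^ i else 0)"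
    by (rule sum.cong) (auto simp: sc_one sc_zero)
  also have "\<dots> = K ^ (m mod n)" using n2 by (simp add: sum.delta)
  also have "\<dots> = K ^ m" by (rule Kmod[symmetric])
  finally show ?thesis unfolding inH_def by metis
qed

lemma inH_mult: assumes "inH x" "inH y" shows "inH (x * y)"
proof -
  obtain c where x: "x = (\<Sum>i<n. sc (c i) * K ^ i)" using assms(1) inH_def by blast
  obtain d where y: "y = (\<Sum>i<n. sc (d i) * K ^ i)" using assms(2) inH_def by blast
  have "x * y = (\<Sum>l<n. \<Sum>i<n. sc (c i * d l) * K ^ (i + l))"
    unfolding x y by (simp add: sum_distrib_left sum_distrib_right mult.assoc power_add scs)
  also have "inH \<dots>"
    by (intro inH_sum inH_smult inH_K) auto
  finally show ?thesis .
qed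

lemma inAE_add: "inAE x \<Longrightarrow> inAE y \<Longrightarrow> inAE (x + y)"
  unfolding inAE_def by (metis distrib_right)

lemma inAE_lmult: "inAE x \<Longrightarrow> inAE (z * x)"
  unfolding inAE_def by (metis mult.assoc)

lemma inAE_sum: "finite A \<Longrightarrow> (\<And>a. a \<in> A \<Longrightarrow> inAE (f a)) \<Longrightarrow> inAE (sum f A)"
proof (induction A rule: finite_induct)
  case empty then show ?case unfolding inAE_def by (metis mult_zero_left sum.empty)
next
  case (insert x F) then show ?case by (simp add: inAE_add)
qed

lemma inN_sum: "finite A \<Longrightarrow> (\<And>a. a \<in> A \<Longrightarrow> inN (f a)) \<Longrightarrow> inN (sum f A)"
  unfolding inN_def by (auto simp: sum_distrib_right intro!: inAE_sum)

lemma inN_term: assumes "j \<ge> 1" shows "inN (sc c * K ^ i * F ^ j * E ^ j)"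
  unfolding inN_def
proof (intro allI impI)
  fix h assume "inH h"
  then obtain e where h: "h = (\<Sum>l<n. sc (e l) * K ^ l)" using inH_def by blast
  let ?x = "sc c * K ^ i * F ^ j * E ^ j"
  have t: "inAE (?x * K ^ m)" for m
  proof -
    have "E ^ j = E ^ (j - 1) * E" using assms by (metis Suc_diff_le diff_Suc_1 power_Suc2)
    then have "?x * K ^ m = sc c * K ^ i * F ^ j * E ^ (j - 1) * (E * K ^ m)" by (simp add: mult.assoc)
    also have "\<dots> = (sc c * K ^ i * F ^ j * E ^ (j - 1) * (sc (q ^ m) * K ^ m)) * E"
      by (simp add: EKm mult.assoc)
    finally show ?thesis unfolding inAE_def by blast
  qed
  have "?x * h = (\<Sum>l<n. sc (e l) * (?x * K ^ l))"
    unfolding h by (simp add: sum_distrib_left mult.assoc scs mult.commute)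
  also have "inAE \<dots>" by (intro inAE_sum inAE_lmult t) auto
  finally show "inAE (?x * h)" .
qed

lemma sum3: "(\<Sum>(i,j,k)\<in>A\<times>B\<times>C. g i j k) = (\<Sum>i\<in>A. \<Sum>j\<in>B. \<Sum>k\<in>C. (g i j k :: 'a))"
  by (simp add: sum.cartesian_product case_prod_beta)

lemma shiftE: "(\<Sum>k<n. f k * E ^ Suc k) = (\<Sum>k<n. (if k = 0 then 0 else f (k - 1)) * E ^ k)"
proof -
  obtain m where m: "n = Suc m" using n2 by (cases n) auto
  have "(\<Sum>k<n. f k * E ^ Suc k) = (\<Sum>k<m. f k * E ^ Suc k) + f m * E ^ n"
    by (simp add: m)
  also have "\<dots> = (\<Sum>k<m. f k * E ^ Suc k)" by (simp add: En)
  also have "\<dots> = (\<Sum>k<n. (if k = 0 then 0 else f (k - 1)) * E ^ k)"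
    unfolding m sum.lessThan_Suc_shift by simp
  finally show ?thesis .
qed

lemma AE_bs: "\<exists>e. y * E = bs e \<and> (\<forall>i j. e (i,j,0) = 0)"
proof -
  obtain d where y: "y = bs d" using span' by blast
  let ?e = "\<lambda>(i,j,k). if k = 0 then 0 else d (i,j,k-1)"
  have "y * E = (\<Sum>i<n. \<Sum>j<n. \<Sum>k<n. (sc (d (i,j,k)) * K ^ i * F ^ j) * E ^ Suc k)"
    unfolding y bs_def I3_def sum3 by (simp add: sum_distrib_right mult.assoc power_commutes)
  also have "\<dots> = (\<Sum>i<n. \<Sum>j<n. \<Sum>k<n. (if k = 0 then 0 else sc (d (i,j,k-1)) * K ^ i * F ^ j) * E ^ k)"
    by (simp only: shiftE)
  also have "\<dots> = bs ?e"
    unfolding bs_def I3_def sum3 by (intro sum.cong refl) (simp add: sc_zero)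
  finally show ?thesis by auto
qed

lemma H_bs: "(\<Sum>i<n. sc (c i) * K ^ i) = bs (\<lambda>(i,j,k). if j = 0 \<and> k = 0 then c i else 0)"
proof -
  have "bs (\<lambda>(i,j,k). if j = 0 \<and> k = 0 then c i else 0)
     = (\<Sum>i<n. \<Sum>j<n. \<Sum>k<n. if k = 0 then (if j = 0 then sc (c i) * K ^ i else 0) else 0)"
    unfolding bs_def I3_def sum3 by (intro sum.cong refl) (simp add: sc_zero)
  also have "\<dots> = (\<Sum>i<n. sc (c i) * K ^ i)" using n2 by (simp add: sum.delta)
  finally show ?thesis by simp
qed

lemma sep: assumes "inH x" "inAE x" shows "x = 0"
proof -
  obtain c where x: "x = (\<Sum>i<n. sc (c i) * K ^ i)" using assms(1) inH_def by blast
  obtain y where y: "x = y * E" using assms(2) inAE_def by blast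
  obtain e where e: "y * E = bs e" "\<forall>i j. e (i,j,0) = 0" using AE_bs by blast
  have "bs (\<lambda>(i,j,k). if j = 0 \<and> k = 0 then c i else 0) - bs e = 0"
    using x y e H_bs by simp
  then have "bs (\<lambda>t. (\<lambda>(i,j,k). if j = 0 \<and> k = 0 then c i else 0) t - e t) = 0"
    by (simp add: bs_diff)
  note h = this
  have "c i = 0" if "i < n" for i
  proof -
    have "(i,0,0) \<in> I3" using that n2 by (auto simp: I3_def)
    from indep'[OF h this] show ?thesis using e(2) by simp
  qed
  then show ?thesis using x by (simp add: sc_zero)
qed

lemma split_sum: "(\<Sum>(i,j)\<in>{..<n}\<times>{..<n}. f i j) = (\<Sum>i<n. f i 0) + (\<Sum>(i,j)\<in>{..<n}\<times>{1..<n}. (f i j :: 'a))"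
proof -
  have "{..<n}\<times>{..<n} = {..<n}\<times>{0} \<union> {..<n}\<times>{1..<n}" by auto
  then have "(\<Sum>(i,j)\<in>{..<n}\<times>{..<n}. f i j) = (\<Sum>(i,j)\<in>{..<n}\<times>{0} \<union> {..<n}\<times>{1..<n}. f i j)"
    by (simp only:)
  also have "\<dots> = (\<Sum>(i,j)\<in>{..<n}\<times>{0}. f i j) + (\<Sum>(i,j)\<in>{..<n}\<times>{1..<n}. f i j)"
    by (rule sum.union_disjoint) auto
  also have "(\<Sum>(i,j)\<in>{..<n}\<times>{0}. f i j) = (\<Sum>i<n. f i 0)"
    by (simp add: sum.cartesian_product[symmetric])
  finally show ?thesis .
qed

lemma deco: "(\<Sum>(i,j)\<in>{..<n}\<times>{..<n}. sc (b i j) * K ^ i * F ^ j * E ^ j)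
   = (\<Sum>i<n. sc (b i 0) * K ^ i) + (\<Sum>(i,j)\<in>{..<n}\<times>{1..<n}. sc (b i j) * K ^ i * F ^ j * E ^ j)"
  "inH (\<Sum>i<n. sc (b i 0) * K ^ i)"
  "inN (\<Sum>(i,j)\<in>{..<n}\<times>{1..<n}. sc (b i j) * K ^ i * F ^ j * E ^ j)"
proof -
  show "(\<Sum>(i,j)\<in>{..<n}\<times>{..<n}. sc (b i j) * K ^ i * F ^ j * E ^ j)
   = (\<Sum>i<n. sc (b i 0) * K ^ i) + (\<Sum>(i,j)\<in>{..<n}\<times>{1..<n}. sc (b i j) * K ^ i * F ^ j * E ^ j)"
    by (simp add: split_sum)
  show "inH (\<Sum>i<n. sc (b i 0) * K ^ i)" unfolding inH_def by (rule exI[of _ "\<lambda>i. b i 0"]) (rule refl)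
  show "inN (\<Sum>(i,j)\<in>{..<n}\<times>{1..<n}. sc (b i j) * K ^ i * F ^ j * E ^ j)"
    by (rule inN_sum) (auto intro!: inN_term)
qed

lemma key: assumes "inH uH" "inH vH" "inN uN" "inN vN" "(uH + uN) * (vH + vN) = 1"
  shows "uH * vH = 1"
proof -
  have "1 - uH * vH = uN * vH + (uH + uN) * vN"
    using assms(5) by (simp add: algebra_simps)
  moreover have "inAE (uN * vH)" using assms(2,3) inN_def by blast
  moreover have "inAE vN" using assms(4) inH_K[of 0] inN_def by fastforce
  ultimately have "inAE (1 - uH * vH)" by (metis inAE_add inAE_lmult)
  moreover have "inH (1 - uH * vH)" using inH_K[of 0] inH_diff inH_mult assms(1,2) by simp
  ultimately have "1 - uH * vH = 0" by (rule sep[rotated])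
  then show ?thesis by simp
qed

lemma main:
  assumes u_def: "u = (\<Sum>(i,j)\<in>{..<n}\<times>{..<n}. sc (a i j) * K ^ i * F ^ j * E ^ j)"
    and "\<exists>v. is_inverse u v"
  shows "\<exists>w. is_inverse (\<Sum>i<n. sc (a i 0) * K ^ i) w \<and>
           (\<forall>v. is_inverse u v \<longrightarrow>
              (\<exists>b :: nat \<Rightarrow> nat \<Rightarrow> complex.
                 v = w + (\<Sum>(i,j)\<in>{..<n}\<times>{1..<n}. sc (b i j) * K ^ i * F ^ j * E ^ j)))"
proof -
  obtain v0 where v0: "u * v0 = 1" "v0 * u = 1" using assms(2) is_inverse_def by blast
  have "K ^ (n - 1) * u * K = (\<Sum>(i,j)\<in>{..<n}\<times>{..<n}. sc (a i j * (q ^ j * inverse q ^ j)) * K ^ i * F ^ j * E ^ j)"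
    unfolding u_def sum_distrib_left sum_distrib_right
    by (rule sum.cong[OF refl]) (simp add: case_prod_beta conj_term del: One_nat_def)
  also have "\<dots> = u" unfolding u_def using q0 by (simp add: power_inverse)
  finally have c1: "K ^ (n - 1) * u * K = u" .
  have Ku: "K * u = u * K"
  proof -
    have "K * u = K * (K ^ (n - 1) * u * K)" using c1 by simp
    also have "\<dots> = u * K" by (simp add: mult.assoc[symmetric] Kinv2 del: One_nat_def)
    finally show ?thesis .
  qed
  have Kv: "K * v0 = v0 * K"
  proof -
    have "v0 * K = v0 * K * (u * v0)" using v0 by simp
    also have "\<dots> = v0 * (K * u) * v0" by (simp add: mult.assoc)
    also have "\<dots> = K * v0" by (simp add: Ku v0 mult.assoc[symmetric])
    finally show ?thesis by simp
  qed
  obtain b where vb: "v0 = (\<Sum>(i,j)\<in>{..<n}\<times>{..<n}. sc (b i j) * K ^ i * F ^ j * E ^ j)"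
    using comm_K[OF Kv] by blast
  define uH where "uH = (\<Sum>i<n. sc (a i 0) * K ^ i)"
  define uN where "uN = (\<Sum>(i,j)\<in>{..<n}\<times>{1..<n}. sc (a i j) * K ^ i * F ^ j * E ^ j)"
  define vH where "vH = (\<Sum>i<n. sc (b i 0) * K ^ i)"
  define vN where "vN = (\<Sum>(i,j)\<in>{..<n}\<times>{1..<n}. sc (b i j) * K ^ i * F ^ j * E ^ j)"
  have u2: "u = uH + uN" "inH uH" "inN uN" unfolding u_def uH_def uN_def
    by (rule deco(1), rule deco(2), rule deco(3))
  have v2: "v0 = vH + vN" "inH vH" "inN vN" unfolding vb vH_def vN_def
    by (rule deco(1), rule deco(2), rule deco(3))
  have i1: "uH * vH = 1" using key[of uH vH uN vN] u2 v2 v0 by simp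
  have i2: "vH * uH = 1" using key[of vH uH vN uN] u2 v2 v0 by simp
  show ?thesis
  proof (intro exI conjI allI impI)
    show "is_inverse (\<Sum>i<n. sc (a i 0) * K ^ i) vH" using i1 i2 unfolding uH_def is_inverse_def by simp
    fix v assume "is_inverse u v"
    then have "v = v0" unfolding is_inverse_def by (metis v0(2) mult.assoc mult_1 mult_1_right)
    then show "v = vH + (\<Sum>(i,j)\<in>{..<n}\<times>{1..<n}. sc (b i j) * K ^ i * F ^ j * E ^ j)"
      using v2 vN_def by simp
  qed
qed

end

theorem mainTheorem8:
  fixes n :: nat and q :: complex and sc :: "complex \<Rightarrow> 'a::ring_1"
    and K E F u :: 'a and a :: "nat \<Rightarrow> nat \<Rightarrow> complex"
  assumes "n \<ge> 2"
    and "primitive_root n q"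
    and "uq_sl2 n q sc K E F"
    and u_def: "u = (\<Sum>(i,j)\<in>{..<n}\<times>{..<n}. sc (a i j) * K ^ i * F ^ j * E ^ j)"
    and "\<exists>v. is_inverse u v"
  shows "\<exists>w. is_inverse (\<Sum>i<n. sc (a i 0) * K ^ i) w \<and>
           (\<forall>v. is_inverse u v \<longrightarrow>
              (\<exists>b :: nat \<Rightarrow> nat \<Rightarrow> complex.
                 v = w + (\<Sum>(i,j)\<in>{..<n}\<times>{1..<n}. sc (b i j) * K ^ i * F ^ j * E ^ j)))"
proof -
  interpret uqloc n q sc K E F using assms(1-3) by unfold_locales
  show ?thesis using main[OF u_def assms(5)] .
qed

end
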